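(* For the unit-sum normalization, there is an absolute constant $C>0$ such that for every $n\ge1$ and every truthful-in-expectation mechanism $J$ on $n$ agents and $n$ items, $ar(J)\le C/\sqrt n$.
   Context: Agents $N=\{1,\dots,n\}$, items $M=\{1,\dots,n\}$, outcomes are bijections $\mu$ ($O$ the set of outcomes). Unit-sum valuation functions: injective $u_i:M\to\mathbb R_{\ge0}$ with $\sum_j u_i(j)=1$; $V$ the set of these, $V^n$ the set of profiles. A (randomized) mechanism $J$ maps each profile to a distribution over $O$; $J(\mathbf u)_i$ is agent $i$'s random item. $J$ is truthful-in-expectation if for all $i$, $\mathbf u=(u_i,u_{-i})\in V^n$, $\tilde u_i\in V$: $\mathbb E[u_i(J(u_i,u_{-i})_i)]\ge\mathbb E[u_i(J(\tilde u_i,u_{-i})_i)]$. $ar(J)=\inf_{\mathbf u\in V^n}\mathbb E[\sum_i u_i(J(\mathbf u)_i)]/\max_{\mu\in O}\sum_i u_i(\mu_i)$. *)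

theory Defs
  imports "HOL-Probability.Probability" "HOL-Combinatorics.Permutations"
begin

(* Agents and items are indexed by {..<n} (i.e. 0..n-1 instead of 1..n).
   Valuations/profiles are extended by 0 outside the index range, so that the
   sets below are in bijection with V and V^n. *)

definition unit_sum_val :: "nat \<Rightarrow> (nat \<Rightarrow> real) \<Rightarrow> bool" where
  "unit_sum_val n v \<longleftrightarrow> inj_on v {..<n} \<and> (\<forall>j<n. v j \<ge> 0) \<and>
     (\<Sum>j<n. v j) = 1 \<and> (\<forall>j\<ge>n. v j = 0)"

definition profile :: "nat \<Rightarrow> (nat \<Rightarrow> nat \<Rightarrow> real) \<Rightarrow> bool" where
  "profile n u \<longleftrightarrow> (\<forall>i<n. unit_sum_val n (u i)) \<and> (\<forall>i\<ge>n. u i = (\<lambda>_. 0))"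

definition outcomes :: "nat \<Rightarrow> (nat \<Rightarrow> nat) set" where
  "outcomes n = {\<mu>. \<mu> permutes {..<n}}"

definition mechanism :: "nat \<Rightarrow> ((nat \<Rightarrow> nat \<Rightarrow> real) \<Rightarrow> (nat \<Rightarrow> nat) pmf) \<Rightarrow> bool" where
  "mechanism n J \<longleftrightarrow> (\<forall>u. profile n u \<longrightarrow> set_pmf (J u) \<subseteq> outcomes n)"

definition truthful_in_expectation ::
  "nat \<Rightarrow> ((nat \<Rightarrow> nat \<Rightarrow> real) \<Rightarrow> (nat \<Rightarrow> nat) pmf) \<Rightarrow> bool" where
  "truthful_in_expectation n J \<longleftrightarrow>
     (\<forall>i<n. \<forall>u v. profile n u \<longrightarrow> unit_sum_val n v \<longrightarrow>
        measure_pmf.expectation (J u) (\<lambda>\<mu>. u i (\<mu> i))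
        \<ge> measure_pmf.expectation (J (u(i := v))) (\<lambda>\<mu>. u i (\<mu> i)))"

definition welfare :: "nat \<Rightarrow> (nat \<Rightarrow> nat \<Rightarrow> real) \<Rightarrow> (nat \<Rightarrow> nat) \<Rightarrow> real" where
  "welfare n u \<mu> = (\<Sum>i<n. u i (\<mu> i))"

definition approx_ratio :: "nat \<Rightarrow> ((nat \<Rightarrow> nat \<Rightarrow> real) \<Rightarrow> (nat \<Rightarrow> nat) pmf) \<Rightarrow> real" where
  "approx_ratio n J = Inf {measure_pmf.expectation (J u) (welfare n u)
                            / Max (welfare n u ` outcomes n) | u. profile n u}"

end

theory Submission
  imports Defs
begin


definition nrm :: "nat \<Rightarrow> (nat \<Rightarrow> real) \<Rightarrow> nat \<Rightarrow> real" where
  "nrm n r x = (if x < n then r x / (\<Sum>y<n. r y) else 0)"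

lemma nrm_usv:
  assumes "n \<ge> 1" "\<And>x. x < n \<Longrightarrow> r x > 0" "inj_on r {..<n}"
  shows "unit_sum_val n (nrm n r)"
proof -
  have "0 \<in> {..<n}" using assms(1) by simp
  hence ne: "{..<n} \<noteq> {}" by blast
  have Z: "(\<Sum>y<n. r y) > 0"
    using assms(2) ne by (intro sum_pos) auto
  have "inj_on (nrm n r) {..<n}"
    using assms(3) Z unfolding inj_on_def nrm_def by auto
  moreover have "(\<Sum>j<n. nrm n r j) = 1"
    using Z by (simp add: nrm_def sum_divide_distrib[symmetric])
  moreover have "\<forall>j<n. nrm n r j \<ge> 0"
    using Z assms(2) by (auto simp: nrm_def less_imp_le)
  ultimately show ?thesis unfolding unit_sum_val_def by (auto simp: nrm_def)
qed

definition rr :: "nat \<Rightarrow> nat \<Rightarrow> nat \<Rightarrow> real" where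
  "rr n k x = (if x < k then 2 * real n - real x else (real n - real x) / (real n)^2)"

definition rs :: "nat \<Rightarrow> nat \<Rightarrow> nat \<Rightarrow> nat \<Rightarrow> real" where
  "rs n k j x = (if x = j then 3 * real k * real n else rr n k x)"

definition ww where "ww n k = nrm n (rr n k)"
definition ss where "ss n k j = nrm n (rs n k j)"

context
  fixes n k :: nat
  assumes k1: "1 \<le> k" and kn: "k \<le> n"
begin

lemma n1: "1 \<le> n" using k1 kn by simp

lemma rr_top: "x < k \<Longrightarrow> rr n k x > real n" "x < k \<Longrightarrow> rr n k x \<le> 2 * real n"
  using kn by (auto simp: rr_def)

lemma rr_tail: "k \<le> x \<Longrightarrow> x < n \<Longrightarrow> rr n k x > 0 \<and> rr n k x \<le> 1"
proof -
  assume a: "k \<le> x" "x < n"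
  have np: "real n \<ge> 1" using n1 by simp
  have "real n * 1 \<le> real n * real n" using np by (intro mult_left_mono) auto
  hence "(real n - real x) \<le> (real n)^2" by (simp add: power2_eq_square)
  then show ?thesis using a np by (auto simp: rr_def)
qed

lemma rr_pos: "x < n \<Longrightarrow> rr n k x > 0"
proof (cases "x < k")
  case True thus ?thesis using rr_top(1)[OF True] by simp
next
  case False assume "x < n" thus ?thesis using rr_tail False by simp
qed

lemma rr_le: "x < n \<Longrightarrow> rr n k x \<le> 2 * real n"
proof (cases "x < k")
  case True thus ?thesis using rr_top(2)[OF True] by simp
next
  case False assume "x < n" 
  hence "rr n k x \<le> 1" using rr_tail False by simp
  moreover have "(1::real) \<le> 2 * real n" using n1 by simp
  ultimately show ?thesis by linarith
qed

lemma rr_inj: "inj_on (rr n k) {..<n}"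
proof (rule inj_onI)
  fix x y assume xy: "x \<in> {..<n}" "y \<in> {..<n}" "rr n k x = rr n k y"
  have np: "real n > 0" using n1 by simp
  show "x = y"
  proof (cases "x < k"; cases "y < k")
    assume "x < k" "y < k" thus ?thesis using xy by (simp add: rr_def)
  next
    assume a: "x < k" "\<not> y < k" 
    have "rr n k x > real n" using rr_top(1) a(1) by simp
    moreover have "rr n k y \<le> 1" using rr_tail[of y] a xy by simp
    ultimately show ?thesis using xy n1 by simp
  next
    assume a: "\<not> x < k" "y < k" 
    have "rr n k y > real n" using rr_top(1) a(2) by simp
    moreover have "rr n k x \<le> 1" using rr_tail[of x] a xy by simp
    ultimately show ?thesis using xy n1 by simp
  next
    assume "\<not> x < k" "\<not> y < k" thus ?thesis using xy np by (simp add: rr_def)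
  qed
qed

lemma ww_usv: "unit_sum_val n (ww n k)"
  unfolding ww_def using nrm_usv n1 rr_pos rr_inj by blast

lemma rs_pos: "x < n \<Longrightarrow> rs n k j x > 0"
  using rr_pos k1 n1 by (auto simp: rs_def)

lemma big: "3 * real k * real n > 2 * real n"
proof -
  have "3 * real n \<le> 3 * real k * real n" using k1 n1 by simp
  thus ?thesis using n1 by simp
qed

lemma rs_inj: "inj_on (rs n k j) {..<n}"
proof (rule inj_onI)
  fix x y assume xy: "x \<in> {..<n}" "y \<in> {..<n}" "rs n k j x = rs n k j y"
  show "x = y"
  proof (cases "x = j"; cases "y = j")
    assume "x = j" "y \<noteq> j"
    hence "rr n k y = 3 * real k * real n" using xy by (simp add: rs_def)
    thus ?thesis using rr_le[of y] big xy(2) by simp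
  next
    assume "x \<noteq> j" "y = j"
    hence "rr n k x = 3 * real k * real n" using xy by (simp add: rs_def)
    thus ?thesis using rr_le[of x] big xy(1) by simp
  next
    assume "x \<noteq> j" "y \<noteq> j"
    thus ?thesis using xy rr_inj by (simp add: rs_def inj_on_def)
  qed simp
qed

lemma ss_usv: "unit_sum_val n (ss n k j)"
  unfolding ss_def using nrm_usv n1 rs_pos rs_inj by blast

lemma Zbounds: "real k * real n \<le> (\<Sum>y<n. rr n k y)" "(\<Sum>y<n. rr n k y) \<le> 2 * real k * real n + 1"
proof -
  have split: "(\<Sum>y<n. rr n k y) = (\<Sum>y<k. rr n k y) + (\<Sum>y\<in>{k..<n}. rr n k y)"
    using kn by (metis lessThan_atLeast0 sum.atLeastLessThan_concat zero_le)
  have t1: "(\<Sum>y<k. rr n k y) \<ge> (\<Sum>y<k. real n)"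
    by (intro sum_mono) (use rr_top in \<open>auto intro: less_imp_le\<close>)
  have t2: "(\<Sum>y<k. rr n k y) \<le> (\<Sum>y<k. 2 * real n)"
    by (intro sum_mono) (use rr_top in auto)
  have t3: "(\<Sum>y\<in>{k..<n}. rr n k y) \<ge> 0"
    by (intro sum_nonneg) (use rr_tail in \<open>auto intro: less_imp_le\<close>)
  have "(\<Sum>y\<in>{k..<n}. rr n k y) \<le> (\<Sum>y\<in>{k..<n}. (real n - real y) / (real n)^2)"
    by (intro sum_mono) (auto simp: rr_def)
  also have "\<dots> \<le> (\<Sum>y\<in>{k..<n}. 1 / real n)"
  proof (intro sum_mono)
    fix y assume "y \<in> {k..<n}"
    hence "real n - real y \<le> real n" by simp
    hence "(real n - real y) / (real n)^2 \<le> real n / (real n)^2"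
      by (intro divide_right_mono) auto
    thus "(real n - real y) / (real n)^2 \<le> 1 / real n" using n1 by (simp add: power2_eq_square)
  qed
  also have "\<dots> \<le> 1" using n1 kn by (simp add: divide_le_eq) 
  finally have t4: "(\<Sum>y\<in>{k..<n}. rr n k y) \<le> 1" .
  show "real k * real n \<le> (\<Sum>y<n. rr n k y)" using split t1 t3 by simp
  show "(\<Sum>y<n. rr n k y) \<le> 2 * real k * real n + 1" using split t2 t4 by simp
qed

end


lemma nrm_nonneg: assumes "\<And>x. x < n \<Longrightarrow> r x > 0" shows "nrm n r x \<ge> 0"
proof (cases "x < n")
  case True
  have "(\<Sum>y<n. r y) \<ge> 0" using assms by (intro sum_nonneg) (auto intro: less_imp_le)
  moreover have "r x \<ge> 0" using assms True by (auto intro: less_imp_le)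
  ultimately show ?thesis using True by (simp add: nrm_def)
qed (simp add: nrm_def)

lemma nrm_le1: "(\<And>x. x < n \<Longrightarrow> r x > 0) \<Longrightarrow> nrm n r x \<le> 1"
proof (cases "x < n")
  case True
  assume p: "\<And>x. x < n \<Longrightarrow> r x > 0"
  have "r x \<le> (\<Sum>y<n. r y)" using True p by (intro member_le_sum) (auto intro: less_imp_le)
  moreover have "r x > 0" using p True by simp
  ultimately show ?thesis using True by (simp add: nrm_def)
qed (simp add: nrm_def)

context
  fixes n k :: nat
  assumes k1: "1 \<le> k" and kn: "k \<le> n"
begin

lemma ww_nonneg: "ww n k x \<ge> 0"
  unfolding ww_def using rr_pos[OF k1 kn] by (rule nrm_nonneg)

lemma ss_nonneg: "ss n k j x \<ge> 0"
  unfolding ss_def using rs_pos[OF k1 kn] by (rule nrm_nonneg)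

lemma ss_le1: "ss n k j x \<le> 1"
  unfolding ss_def using rs_pos[OF k1 kn] by (rule nrm_le1)

lemma kn1: "real k * real n \<ge> 1"
proof -
  have "1 \<le> k * n" using k1 kn by (simp add: Suc_le_eq)
  hence "real 1 \<le> real (k * n)" by (simp only: of_nat_le_iff)
  thus ?thesis by simp
qed

lemma ww_low: assumes "x < k" shows "ww n k x \<ge> 1 / (3 * real k)"
proof -
  have xn: "x < n" using assms kn by simp
  have Z: "(\<Sum>y<n. rr n k y) \<le> 3 * real k * real n" using Zbounds(2)[OF k1 kn] kn1 by simp
  have Zp: "(\<Sum>y<n. rr n k y) > 0" using Zbounds(1)[OF k1 kn] kn1 by simp
  have r: "rr n k x \<ge> real n" using rr_top(1)[OF k1 kn assms] by simp
  have "real n > 0" using kn assms by simp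
  hence "1 / (3 * real k) = real n / (3 * real k * real n)" by simp
  also have "\<dots> \<le> rr n k x / (\<Sum>y<n. rr n k y)"
    using Z Zp r kn1 by (intro frac_le) auto
  finally show ?thesis using xn by (simp add: ww_def nrm_def)
qed

lemma Zj: assumes "j < n" shows "(\<Sum>y<n. rs n k j y) = (\<Sum>y<n. rr n k y) + (3 * real k * real n - rr n k j)"
proof -
  have "(\<Sum>y<n. rs n k j y) = (\<Sum>y<n. rr n k y + (if y = j then 3 * real k * real n - rr n k j else 0))"
    by (intro sum.cong) (auto simp: rs_def)
  also have "\<dots> = (\<Sum>y<n. rr n k y) + (3 * real k * real n - rr n k j)"
    using assms by (simp add: sum.distrib)
  finally show ?thesis .
qed

lemma ss_high: assumes "j < k" shows "ss n k j j \<ge> 1 / 2"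
proof -
  have jn: "j < n" using assms kn by simp
  have Z: "(\<Sum>y<n. rr n k y) \<le> 3 * real k * real n" using Zbounds(2)[OF k1 kn] kn1 by simp
  have "rr n k j > 0" using rr_pos[OF k1 kn jn] .
  hence S: "(\<Sum>y<n. rs n k j y) \<le> 2 * (3 * real k * real n)" using Zj[OF jn] Z by simp
  have Sp: "(\<Sum>y<n. rs n k j y) > 0" using Zj[OF jn] rr_le[OF k1 kn jn] big[OF k1 kn] Zbounds(1)[OF k1 kn] kn1 by linarith
  have "3 * real k * real n \<noteq> 0" using kn1 by linarith
  hence "1/2 = (3 * real k * real n) / (2 * (3 * real k * real n))" by simp
  also have "\<dots> \<le> (3 * real k * real n) / (\<Sum>y<n. rs n k j y)"
    using S Sp kn1 by (intro frac_le) auto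
  finally show ?thesis using jn by (simp add: ss_def nrm_def rs_def)
qed

lemma ss_le_ww: assumes "j < k" shows "ss n k j x \<le> 3 * real k * ww n k x"
proof (cases "x < n")
  case False thus ?thesis by (simp add: ss_def ww_def nrm_def)
next
  case xn: True
  have jn: "j < n" using assms kn by simp
  show ?thesis
  proof (cases "x = j")
    case True
    have "1 \<le> 3 * real k * ww n k x" using ww_low[of x] True assms k1 by (simp add: field_simps)
    thus ?thesis using ss_le1[of j x] by linarith
  next
    case False
    have Zp: "(\<Sum>y<n. rr n k y) > 0" using Zbounds(1)[OF k1 kn] kn1 by simp
    have le: "(\<Sum>y<n. rr n k y) \<le> (\<Sum>y<n. rs n k j y)"
      using Zj[OF jn] rr_le[OF k1 kn jn] big[OF k1 kn] by simp
    have "ss n k j x = rr n k x / (\<Sum>y<n. rs n k j y)" using xn False by (simp add: ss_def nrm_def rs_def)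
    also have "\<dots> \<le> rr n k x / (\<Sum>y<n. rr n k y)"
      using Zp le rr_pos[OF k1 kn xn] by (intro divide_left_mono) auto
    also have "\<dots> = ww n k x" using xn by (simp add: ww_def nrm_def)
    also have "\<dots> \<le> 3 * real k * ww n k x"
    proof -
      have "1 \<le> 3 * real k" using k1 by simp
      from mult_right_mono[OF this ww_nonneg[of x]] show ?thesis by simp
    qed
    finally show ?thesis .
  qed
qed

end


abbreviation E :: "'a pmf \<Rightarrow> ('a \<Rightarrow> real) \<Rightarrow> real" where
  "E p f \<equiv> measure_pmf.expectation p f"

lemma E_le_const: "finite (set_pmf p) \<Longrightarrow> (\<And>x. x \<in> set_pmf p \<Longrightarrow> f x \<le> c) \<Longrightarrow> E p f \<le> c"
  by (rule measure_pmf.integral_le_const) (auto intro: integrable_measure_pmf_finite AE_pmfI)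

lemma E_mono: "finite (set_pmf p) \<Longrightarrow> (\<And>x. x \<in> set_pmf p \<Longrightarrow> f x \<le> g x) \<Longrightarrow> E p f \<le> E p g"
  by (rule integral_mono_AE) (auto intro: integrable_measure_pmf_finite AE_pmfI)

lemma E_sum: "finite (set_pmf p) \<Longrightarrow> E p (\<lambda>x. \<Sum>i\<in>I. f i x) = (\<Sum>i\<in>I. E p (f i))"
  by (rule Bochner_Integration.integral_sum) (auto intro: integrable_measure_pmf_finite)

lemma finite_outcomes: "finite (outcomes n)"
  unfolding outcomes_def using finite_permutations[of "{..<n}"] by simp

definition PP :: "nat \<Rightarrow> nat \<Rightarrow> (nat \<Rightarrow> nat) \<Rightarrow> nat \<Rightarrow> nat \<Rightarrow> real" where
  "PP n k \<sigma> = (\<lambda>a. if a < n then (if \<sigma> a < k then ss n k (\<sigma> a) else ww n k) else (\<lambda>_. 0))"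

definition QQ :: "nat \<Rightarrow> nat \<Rightarrow> (nat \<Rightarrow> nat) \<Rightarrow> nat \<Rightarrow> nat \<Rightarrow> nat \<Rightarrow> real" where
  "QQ n k \<sigma> m = (\<lambda>a. if a < n then (if \<sigma> a < k \<and> \<sigma> a \<noteq> m then ss n k (\<sigma> a) else ww n k) else (\<lambda>_. 0))"

context
  fixes n k :: nat
  assumes k1: "1 \<le> k" and kn: "k \<le> n"
begin

lemma PP_profile: "profile n (PP n k \<sigma>)"
  unfolding profile_def PP_def using ww_usv[OF k1 kn] ss_usv[OF k1 kn] by auto

lemma QQ_profile: "profile n (QQ n k \<sigma> m)"
  unfolding profile_def QQ_def using ww_usv[OF k1 kn] ss_usv[OF k1 kn] by auto

lemma QQ_upd:
  assumes p: "\<sigma> permutes {..<n}" and m: "m < k"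
  shows "(QQ n k \<sigma> m)(inv \<sigma> m := ss n k m) = PP n k \<sigma>"
proof
  fix a
  have mn: "m < n" using m kn by simp
  have ia: "inv \<sigma> m < n" using permutes_in_image[OF permutes_inv[OF p], of m] mn by simp
  show "((QQ n k \<sigma> m)(inv \<sigma> m := ss n k m)) a = PP n k \<sigma> a"
  proof (cases "a = inv \<sigma> m")
    case True
    hence "\<sigma> a = m" using permutes_inverses(1)[OF p] by simp
    thus ?thesis using True ia m by (simp add: PP_def)
  next
    case False
    hence "\<sigma> a \<noteq> m" using permutes_inverses(2)[OF p] by metis
    thus ?thesis using False by (simp add: PP_def QQ_def)
  qed
qed

lemma QQ_swap:
  assumes m: "m < k" and j: "k \<le> j"
  shows "QQ n k (Transposition.transpose m j \<circ> \<sigma>) m = QQ n k \<sigma> m"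
proof
  fix a
  have mj: "m \<noteq> j" using m j by simp
  show "QQ n k (Transposition.transpose m j \<circ> \<sigma>) m a = QQ n k \<sigma> m a"
  proof (cases "\<sigma> a = m \<or> \<sigma> a = j")
    case True thus ?thesis using m j mj by (auto simp: QQ_def)
  next
    case False thus ?thesis by (simp add: QQ_def Transposition.transpose_apply_other)
  qed
qed

lemma prof_nonneg: "profile n u \<Longrightarrow> u i x \<ge> 0"
  unfolding profile_def unit_sum_val_def
  by (cases "i < n"; cases "x < n") auto

lemma perm_sum_le1:
  assumes mu: "\<mu> \<in> outcomes n" and g: "inj_on g A" "g ` A \<subseteq> {..<n}"
  shows "(\<Sum>a\<in>A. ww n k (\<mu> (g a))) \<le> 1"
proof -
  have mp: "\<mu> permutes {..<n}" using mu by (simp add: outcomes_def)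
  have fA: "finite A" using g finite_subset[OF g(2)] finite_image_iff by (metis finite_lessThan)
  have inj: "inj_on (\<mu> \<circ> g) A" using g permutes_inj_on[OF mp] by (simp add: comp_inj_on)
  have "(\<Sum>a\<in>A. ww n k (\<mu> (g a))) = (\<Sum>x\<in>(\<mu> \<circ> g) ` A. ww n k x)"
    using sum.reindex[OF inj, of "ww n k"] by simp
  also have "\<dots> \<le> (\<Sum>x<n. ww n k x)"
  proof (rule sum_mono2)
    show "(\<mu> \<circ> g) ` A \<subseteq> {..<n}"
    proof
      fix y assume "y \<in> (\<mu> \<circ> g) ` A"
      then obtain a where a: "a \<in> A" "y = \<mu> (g a)" by auto
      have "g a < n" using g(2) a(1) by auto
      thus "y \<in> {..<n}" using permutes_in_image[OF mp, of "g a"] a by simp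
    qed
  qed (auto simp: ww_nonneg[OF k1 kn])
  also have "\<dots> = 1" using ww_usv[OF k1 kn] by (simp add: unit_sum_val_def)
  finally show ?thesis .
qed

end


abbreviation tr where "tr \<equiv> Transposition.transpose"

context
  fixes n k :: nat and J :: "(nat \<Rightarrow> nat \<Rightarrow> real) \<Rightarrow> (nat \<Rightarrow> nat) pmf"
  assumes k1: "1 \<le> k" and kn: "k \<le> n"
    and mech: "mechanism n J" and truth: "truthful_in_expectation n J"
begin

lemma supp: "profile n u \<Longrightarrow> set_pmf (J u) \<subseteq> outcomes n"
  using mech by (simp add: mechanism_def)

lemma supp_fin: "profile n u \<Longrightarrow> finite (set_pmf (J u))"
  using supp finite_outcomes finite_subset by blast

definition HH where "HH \<sigma> m = E (J (QQ n k \<sigma> m)) (\<lambda>\<mu>. ww n k (\<mu> (inv \<sigma> m)))"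

lemma special_bound:
  assumes p: "\<sigma> permutes {..<n}" and a: "a < n" "\<sigma> a < k"
  shows "E (J (PP n k \<sigma>)) (\<lambda>\<mu>. ss n k (\<sigma> a) (\<mu> a)) \<le> 3 * real k * HH \<sigma> (\<sigma> a)"
proof -
  define m where "m = \<sigma> a"
  have ia: "inv \<sigma> m = a" unfolding m_def using permutes_inverses(2)[OF p] by simp
  have fin: "finite (set_pmf (J (PP n k \<sigma>)))" using supp_fin PP_profile[OF k1 kn] by blast
  have "E (J (PP n k \<sigma>)) (\<lambda>\<mu>. ss n k m (\<mu> a)) \<le> E (J (PP n k \<sigma>)) (\<lambda>\<mu>. 3 * real k * ww n k (\<mu> a))"
    using fin ss_le_ww[OF k1 kn] a unfolding m_def by (intro E_mono) auto
  also have "\<dots> = 3 * real k * E (J (PP n k \<sigma>)) (\<lambda>\<mu>. ww n k (\<mu> a))" by simp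
  also have "E (J (PP n k \<sigma>)) (\<lambda>\<mu>. ww n k (\<mu> a)) \<le> HH \<sigma> m"
  proof -
    have u: "QQ n k \<sigma> m a = ww n k" using a unfolding QQ_def m_def by simp
    have am: "m < k" using a(2) unfolding m_def .
    have upd0: "(QQ n k \<sigma> m)(inv \<sigma> m := ss n k m) = PP n k \<sigma>" by (rule QQ_upd[OF k1 kn p am])
    have upd: "(QQ n k \<sigma> m)(a := ss n k m) = PP n k \<sigma>" using upd0 unfolding ia .
    have "E (J (QQ n k \<sigma> m)) (\<lambda>\<mu>. QQ n k \<sigma> m a (\<mu> a))
          \<ge> E (J ((QQ n k \<sigma> m)(a := ss n k m))) (\<lambda>\<mu>. QQ n k \<sigma> m a (\<mu> a))"
    proof -
      have T: "\<forall>i<n. \<forall>u v. profile n u \<longrightarrow> unit_sum_val n v \<longrightarrow>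
        E (J u) (\<lambda>\<mu>. u i (\<mu> i)) \<ge> E (J (u(i := v))) (\<lambda>\<mu>. u i (\<mu> i))"
        using truth unfolding truthful_in_expectation_def by assumption
      have T2: "profile n u \<longrightarrow> unit_sum_val n v \<longrightarrow>
        E (J u) (\<lambda>\<mu>. u a (\<mu> a)) \<ge> E (J (u(a := v))) (\<lambda>\<mu>. u a (\<mu> a))" for u v
        using spec[OF spec[OF mp[OF spec[OF T, of a] a(1)], of u], of v] .
      show ?thesis by (rule T2[of "QQ n k \<sigma> m" "ss n k m", rule_format, OF QQ_profile[OF k1 kn] ss_usv[OF k1 kn]])
    qed
    thus ?thesis unfolding upd u HH_def ia .
  qed
  hence "3 * real k * E (J (PP n k \<sigma>)) (\<lambda>\<mu>. ww n k (\<mu> a)) \<le> 3 * real k * HH \<sigma> m"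
    by (intro mult_left_mono) auto
  finally show ?thesis unfolding m_def .
qed

lemma welfare_bound:
  assumes p: "\<sigma> permutes {..<n}"
  shows "E (J (PP n k \<sigma>)) (welfare n (PP n k \<sigma>)) \<le> 1 + 3 * real k * (\<Sum>m<k. HH \<sigma> m)"
proof -
  let ?p = "J (PP n k \<sigma>)"
  have fin: "finite (set_pmf ?p)" using supp_fin PP_profile[OF k1 kn] by blast
  let ?A1 = "{..<n} \<inter> {a. \<sigma> a < k}" and ?A2 = "{..<n} \<inter> - {a. \<sigma> a < k}"
  have "E ?p (welfare n (PP n k \<sigma>)) = (\<Sum>a<n. E ?p (\<lambda>\<mu>. PP n k \<sigma> a (\<mu> a)))"
    unfolding welfare_def by (rule E_sum[OF fin])
  also have "\<dots> = (\<Sum>a<n. if \<sigma> a < k then E ?p (\<lambda>\<mu>. ss n k (\<sigma> a) (\<mu> a)) else E ?p (\<lambda>\<mu>. ww n k (\<mu> a)))"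
    by (intro sum.cong) (auto simp: PP_def)
  also have "\<dots> = (\<Sum>a\<in>?A1. E ?p (\<lambda>\<mu>. ss n k (\<sigma> a) (\<mu> a))) + (\<Sum>a\<in>?A2. E ?p (\<lambda>\<mu>. ww n k (\<mu> a)))"
    by (rule sum.If_cases) simp
  also have "(\<Sum>a\<in>?A2. E ?p (\<lambda>\<mu>. ww n k (\<mu> a))) \<le> 1"
  proof -
    have "(\<Sum>a\<in>?A2. E ?p (\<lambda>\<mu>. ww n k (\<mu> a))) = E ?p (\<lambda>\<mu>. \<Sum>a\<in>?A2. ww n k (\<mu> a))"
      by (rule E_sum[OF fin, symmetric])
    also have "\<dots> \<le> 1"
    proof (rule E_le_const[OF fin])
      fix \<mu> assume "\<mu> \<in> set_pmf ?p"
      hence mu: "\<mu> \<in> outcomes n" using supp[OF PP_profile[OF k1 kn]] by blast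
      have "(\<Sum>a\<in>?A2. ww n k (\<mu> (id a))) \<le> 1"
        by (rule perm_sum_le1[OF k1 kn mu]) auto
      thus "(\<Sum>a\<in>?A2. ww n k (\<mu> a)) \<le> 1" by simp
    qed
    finally show ?thesis .
  qed
  also have "(\<Sum>a\<in>?A1. E ?p (\<lambda>\<mu>. ss n k (\<sigma> a) (\<mu> a))) \<le> (\<Sum>a\<in>?A1. 3 * real k * HH \<sigma> (\<sigma> a))"
  proof (rule sum_mono)
    fix a assume "a \<in> ?A1"
    hence "a < n" "\<sigma> a < k" by auto
    thus "E ?p (\<lambda>\<mu>. ss n k (\<sigma> a) (\<mu> a)) \<le> 3 * real k * HH \<sigma> (\<sigma> a)"
      by (rule special_bound[OF p])
  qed
  also have "\<dots> = 3 * real k * (\<Sum>m<k. HH \<sigma> m)"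
  proof -
    have inj: "inj_on \<sigma> ?A1" using permutes_inj_on[OF p] .
    have img: "\<sigma> ` ?A1 = {..<k}"
    proof
      show "\<sigma> ` ?A1 \<subseteq> {..<k}" by auto
      show "{..<k} \<subseteq> \<sigma> ` ?A1"
      proof
        fix m assume m: "m \<in> {..<k}"
        hence mn: "m < n" using kn by simp
        have "inv \<sigma> m < n" using permutes_in_image[OF permutes_inv[OF p], of m] mn by simp
        moreover have "\<sigma> (inv \<sigma> m) = m" using permutes_inverses(1)[OF p] .
        ultimately have "inv \<sigma> m \<in> ?A1" using m by simp
        thus "m \<in> \<sigma> ` ?A1" using \<open>\<sigma> (inv \<sigma> m) = m\<close> by (metis image_eqI)
      qed
    qed
    have "(\<Sum>m<k. HH \<sigma> m) = (\<Sum>a\<in>?A1. HH \<sigma> (\<sigma> a))"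
      using sum.reindex[OF inj, of "HH \<sigma>"] img by simp
    thus ?thesis by (simp add: sum_distrib_left)
  qed
  finally show ?thesis by linarith
qed

lemma bij_tr: "bij_betw (\<lambda>\<sigma>. tr m j \<circ> \<sigma>) {\<sigma>. \<sigma> permutes {..<n}} {\<sigma>. \<sigma> permutes {..<n}}"
  if "m < n" "j < n" for m j
proof (rule bij_betwI[where g = "\<lambda>\<sigma>. tr m j \<circ> \<sigma>"])
  have t: "tr m j permutes {..<n}" using that by (intro permutes_swap_id) auto
  show "(\<circ>) (tr m j) \<in> {\<sigma>. \<sigma> permutes {..<n}} \<rightarrow> {\<sigma>. \<sigma> permutes {..<n}}"
    using permutes_compose[OF _ t] by auto
  show "(\<circ>) (tr m j) \<in> {\<sigma>. \<sigma> permutes {..<n}} \<rightarrow> {\<sigma>. \<sigma> permutes {..<n}}"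
    using permutes_compose[OF _ t] by auto
next
  fix x :: "nat \<Rightarrow> nat" show "tr m j \<circ> (tr m j \<circ> x) = x" by (simp only: comp_assoc[symmetric] transpose_comp_involutory id_comp)
next
  fix x :: "nat \<Rightarrow> nat" show "tr m j \<circ> (tr m j \<circ> x) = x" by (simp only: comp_assoc[symmetric] transpose_comp_involutory id_comp)
qed

lemma sum_H:
  assumes m: "m < k"
  shows "(\<Sum>\<sigma>\<in>{\<sigma>. \<sigma> permutes {..<n}}. HH \<sigma> m) \<le> real (card {\<sigma>. \<sigma> permutes {..<n}}) / real (n - k + 1)"
proof -
  let ?P = "{\<sigma>. \<sigma> permutes {..<n}}"
  define G where "G \<sigma> j = E (J (QQ n k \<sigma> m)) (\<lambda>\<mu>. ww n k (\<mu> (inv \<sigma> j)))" for \<sigma> j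
  let ?Js = "insert m {k..<n}"
  have mn: "m < n" using m kn by simp
  have eq: "(\<Sum>\<sigma>\<in>?P. G \<sigma> j) = (\<Sum>\<sigma>\<in>?P. HH \<sigma> m)" if j: "j \<in> ?Js" for j
  proof (cases "j = m")
    case True thus ?thesis by (simp add: G_def HH_def)
  next
    case False
    hence j2: "k \<le> j" "j < n" using j by auto
    have "(\<Sum>\<sigma>\<in>?P. HH \<sigma> m) = (\<Sum>\<sigma>\<in>?P. HH (tr m j \<circ> \<sigma>) m)"
      by (rule sum.reindex_bij_betw[OF bij_tr[OF mn j2(2)], of "\<lambda>\<sigma>. HH \<sigma> m", symmetric])
    also have "\<dots> = (\<Sum>\<sigma>\<in>?P. G \<sigma> j)"
    proof (intro sum.cong refl)
      fix \<sigma> assume p: "\<sigma> \<in> ?P"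
      hence b: "bij \<sigma>" using permutes_bij by blast
      have "inv (tr m j \<circ> \<sigma>) m = inv \<sigma> j"
        by (simp only: o_inv_distrib[OF bij_transpose b] inv_transpose_eq comp_apply Transposition.transpose_apply_first)
      thus "HH (tr m j \<circ> \<sigma>) m = G \<sigma> j"
        unfolding HH_def G_def QQ_swap[OF k1 kn m j2(1)] by (rule arg_cong[where f = "\<lambda>t. E (J (QQ n k \<sigma> m)) (\<lambda>\<mu>. ww n k (\<mu> t))"])
    qed
    finally show ?thesis by simp
  qed
  have cardJs: "card ?Js = n - k + 1" using m kn by simp
  have "real (n - k + 1) * (\<Sum>\<sigma>\<in>?P. HH \<sigma> m) = (\<Sum>j\<in>?Js. \<Sum>\<sigma>\<in>?P. G \<sigma> j)"
    using eq cardJs by simp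
  also have "\<dots> = (\<Sum>\<sigma>\<in>?P. \<Sum>j\<in>?Js. G \<sigma> j)" by (rule sum.swap)
  also have "\<dots> \<le> (\<Sum>\<sigma>\<in>?P. 1)"
  proof (intro sum_mono)
    fix \<sigma> assume p: "\<sigma> \<in> ?P"
    hence p': "\<sigma> permutes {..<n}" by simp
    have fin: "finite (set_pmf (J (QQ n k \<sigma> m)))" using supp_fin QQ_profile[OF k1 kn] by blast
    have "(\<Sum>j\<in>?Js. G \<sigma> j) = E (J (QQ n k \<sigma> m)) (\<lambda>\<mu>. \<Sum>j\<in>?Js. ww n k (\<mu> (inv \<sigma> j)))"
      unfolding G_def by (rule E_sum[OF fin, symmetric])
    also have "\<dots> \<le> 1"
    proof (rule E_le_const[OF fin])
      fix \<mu> assume "\<mu> \<in> set_pmf (J (QQ n k \<sigma> m))"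
      hence mu: "\<mu> \<in> outcomes n" using supp QQ_profile[OF k1 kn] by blast
      show "(\<Sum>j\<in>?Js. ww n k (\<mu> (inv \<sigma> j))) \<le> 1"
      proof (rule perm_sum_le1[OF k1 kn mu])
        show "inj_on (inv \<sigma>) ?Js" using permutes_inj_on[OF permutes_inv[OF p']] .
        show "inv \<sigma> ` ?Js \<subseteq> {..<n}"
        proof
          fix y assume "y \<in> inv \<sigma> ` ?Js"
          then obtain j where j: "j \<in> ?Js" "y = inv \<sigma> j" by blast
          have "j \<in> {..<n}" using j(1) mn by auto
          thus "y \<in> {..<n}" using permutes_in_image[OF permutes_inv[OF p'], of j] j(2) by simp
        qed
      qed
    qed
    finally show "(\<Sum>j\<in>?Js. G \<sigma> j) \<le> 1" .
  qed
  also have "\<dots> = real (card ?P)" by simp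
  finally show ?thesis using kn by (simp add: field_simps)
qed

end


lemma img_A1:
  fixes \<sigma> :: "nat \<Rightarrow> nat" and n k :: nat
  assumes p: "\<sigma> permutes {..<n}" and kn: "k \<le> n"
  shows "\<sigma> ` ({..<n} \<inter> {a. \<sigma> a < k}) = {..<k}"
proof
  show "\<sigma> ` ({..<n} \<inter> {a. \<sigma> a < k}) \<subseteq> {..<k}" by auto
  show "{..<k} \<subseteq> \<sigma> ` ({..<n} \<inter> {a. \<sigma> a < k})"
  proof
    fix m assume m: "m \<in> {..<k}"
    hence mn: "m < n" using kn by simp
    have "inv \<sigma> m < n" using permutes_in_image[OF permutes_inv[OF p], of m] mn by simp
    moreover have e: "\<sigma> (inv \<sigma> m) = m" using permutes_inverses(1)[OF p] .
    ultimately have "inv \<sigma> m \<in> {..<n} \<inter> {a. \<sigma> a < k}" using m by simp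
    thus "m \<in> \<sigma> ` ({..<n} \<inter> {a. \<sigma> a < k})" using e by (metis image_eqI)
  qed
qed

lemma welfare_nonneg: "profile n u \<Longrightarrow> welfare n u \<mu> \<ge> 0"
  unfolding welfare_def profile_def unit_sum_val_def
  by (intro sum_nonneg) (metis lessThan_iff not_less order_refl)

lemma ratio_nonneg:
  assumes "profile n u"
  shows "0 \<le> E (J u) (welfare n u) / Max (welfare n u ` outcomes n)"
proof -
  have "0 \<le> E (J u) (welfare n u)"
    using welfare_nonneg[OF assms] by (intro Bochner_Integration.integral_nonneg) auto
  moreover have "0 \<le> Max (welfare n u ` outcomes n)"
  proof -
    have "id \<in> outcomes n" by (simp add: outcomes_def)
    hence "welfare n u id \<le> Max (welfare n u ` outcomes n)"
      using finite_outcomes by (intro Max_ge) auto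
    thus ?thesis using welfare_nonneg[OF assms, of id] by linarith
  qed
  ultimately show ?thesis by simp
qed

context
  fixes n k :: nat and J :: "(nat \<Rightarrow> nat \<Rightarrow> real) \<Rightarrow> (nat \<Rightarrow> nat) pmf"
  assumes k1: "1 \<le> k" and kn: "k \<le> n"
    and mech: "mechanism n J" and truth: "truthful_in_expectation n J"
begin

lemma exists_good:
  "\<exists>\<sigma>. \<sigma> permutes {..<n} \<and>
     E (J (PP n k \<sigma>)) (welfare n (PP n k \<sigma>)) \<le> 1 + 3 * real k * real k / real (n - k + 1)"
proof (rule ccontr)
  let ?P = "{\<sigma>. \<sigma> permutes {..<n}}"
  let ?B = "1 + 3 * real k * real k / real (n - k + 1)"
  let ?N = "real (card ?P)"
  assume "\<not> ?thesis"
  hence gt: "\<And>\<sigma>. \<sigma> \<in> ?P \<Longrightarrow> ?B < E (J (PP n k \<sigma>)) (welfare n (PP n k \<sigma>))" by auto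
  have fin: "finite ?P" using finite_permutations[of "{..<n}"] by simp
  have ne: "?P \<noteq> {}" using permutes_id by blast
  have "(\<Sum>\<sigma>\<in>?P. ?B) < (\<Sum>\<sigma>\<in>?P. E (J (PP n k \<sigma>)) (welfare n (PP n k \<sigma>)))"
    using fin ne gt by (intro sum_strict_mono) auto
  also have "\<dots> \<le> (\<Sum>\<sigma>\<in>?P. 1 + 3 * real k * (\<Sum>m<k. HH n k J \<sigma> m))"
    using welfare_bound[OF k1 kn mech truth] by (intro sum_mono) auto
  also have "\<dots> = ?N + 3 * real k * (\<Sum>m<k. \<Sum>\<sigma>\<in>?P. HH n k J \<sigma> m)"
    by (simp add: sum.distrib sum_distrib_left sum.swap[of _ ?P])
  also have "(\<Sum>m<k. \<Sum>\<sigma>\<in>?P. HH n k J \<sigma> m) \<le> (\<Sum>m<k. ?N / real (n - k + 1))"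
    using sum_H[OF k1 kn mech truth] by (intro sum_mono) auto
  also have "(\<Sum>m<k. ?N / real (n - k + 1)) = real k * ?N / real (n - k + 1)" by simp
  finally have "(\<Sum>\<sigma>\<in>?P. ?B) < ?N + 3 * real k * (real k * ?N / real (n - k + 1))"
    using k1 by (smt (verit) mult_left_mono of_nat_0_le_iff)
  moreover have "(\<Sum>\<sigma>\<in>?P. ?B) = ?N * ?B" by simp
  moreover have "?N * ?B = ?N + 3 * real k * (real k * ?N / real (n - k + 1))"
    by (simp add: algebra_simps)
  ultimately show False by linarith
qed

lemma ratio_bound:
  "approx_ratio n J \<le> (1 + 3 * real k * real k / real (n - k + 1)) / (real k / 2)"
proof -
  let ?B = "1 + 3 * real k * real k / real (n - k + 1)"
  obtain \<sigma> where p: "\<sigma> permutes {..<n}"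
    and Eb: "E (J (PP n k \<sigma>)) (welfare n (PP n k \<sigma>)) \<le> ?B"
    using exists_good by blast
  let ?u = "PP n k \<sigma>"
  let ?S = "{E (J u) (welfare n u) / Max (welfare n u ` outcomes n) | u. profile n u}"
  have pu: "profile n ?u" by (rule PP_profile[OF k1 kn])
  have mem: "E (J ?u) (welfare n ?u) / Max (welfare n ?u ` outcomes n) \<in> ?S" using pu by blast
  have bdd: "bdd_below ?S"
    by (rule bdd_belowI[of _ 0]) (auto intro: ratio_nonneg)
  have inf: "approx_ratio n J \<le> E (J ?u) (welfare n ?u) / Max (welfare n ?u ` outcomes n)"
    unfolding approx_ratio_def by (rule cInf_lower[OF mem bdd])
  let ?A1 = "{..<n} \<inter> {a. \<sigma> a < k}"
  have "real k / 2 = (\<Sum>m<k. 1 / 2)" by simp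
  also have "\<dots> \<le> (\<Sum>m<k. ss n k m m)" by (intro sum_mono ss_high[OF k1 kn]) auto
  also have "\<dots> = (\<Sum>a\<in>?A1. ss n k (\<sigma> a) (\<sigma> a))"
    using sum.reindex[OF permutes_inj_on[OF p], of "\<lambda>m. ss n k m m" ?A1] img_A1[OF p kn] by simp
  also have "\<dots> = (\<Sum>a\<in>?A1. ?u a (\<sigma> a))" by (intro sum.cong) (auto simp: PP_def)
  also have "\<dots> \<le> (\<Sum>a<n. ?u a (\<sigma> a))"
    by (intro sum_mono2) (auto intro: prof_nonneg[OF k1 kn pu])
  also have "\<dots> = welfare n ?u \<sigma>" by (simp add: welfare_def)
  also have "\<dots> \<le> Max (welfare n ?u ` outcomes n)"
    using finite_outcomes p by (intro Max_ge) (auto simp: outcomes_def)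
  finally have M: "real k / 2 \<le> Max (welfare n ?u ` outcomes n)" .
  have E0: "0 \<le> E (J ?u) (welfare n ?u)"
    using welfare_nonneg[OF pu] by (intro Bochner_Integration.integral_nonneg) auto
  have "E (J ?u) (welfare n ?u) / Max (welfare n ?u ` outcomes n) \<le> ?B / (real k / 2)"
    using E0 Eb M k1 by (intro frac_le) auto
  thus ?thesis using inf by linarith
qed

end


lemma canc_aux: "(d::real) \<noteq> 0 \<Longrightarrow> (a * d) / (d * c) = a / c"
  by (rule nonzero_mult_divide_mult_cancel_right2)

lemma arith_final:
  fixes n :: nat
  assumes n1: "1 \<le> n"
  defines "k \<equiv> nat \<lfloor>sqrt (real n)\<rfloor>"
  shows "1 \<le> k" "k \<le> n"
    "(1 + 3 * real k * real k / real (n - k + 1)) / (real k / 2) \<le> 16 / sqrt (real n)"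
proof -
  let ?s = "sqrt (real n)"
  have s1: "1 \<le> ?s" using n1 by simp
  have kf: "real k = of_int \<lfloor>?s\<rfloor>" unfolding k_def using s1 by simp
  have kle: "real k \<le> ?s" using kf by linarith
  have klt: "?s < real k + 1" using kf by linarith
  show k1: "1 \<le> k" using kf s1 by linarith
  have rk1: "1 \<le> real k" using k1 by simp
  have ss: "?s * ?s = real n" by simp
  have kk: "real k * real k \<le> real n"
  proof -
    have "real k * real k \<le> ?s * ?s" using mult_mono[OF kle kle] rk1 by simp
    thus ?thesis using ss by linarith
  qed
  have "real k \<le> real k * real k" using rk1 by (simp add: mult_le_cancel_left1 )
  hence "real k \<le> real n" using kk by linarith
  thus kn: "k \<le> n" by simp
  have d: "real (n - k + 1) = real n - real k + 1" using kn by (simp add: of_nat_diff)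
  have 2: "2 * real k \<le> real k * real k + 1"
  proof -
    have "0 \<le> (real k - 1) * (real k - 1)" by simp
    thus ?thesis by (simp add: algebra_simps)
  qed
  have D: "real n / 2 \<le> real n - real k + 1" using 2 kk by linarith
  have npos: "real n > 0" using n1 by simp
  have spos: "?s > 0" using s1 by simp
  have Dpos: "real n - real k + 1 > 0" using D npos by linarith
  have eq: "(1 + 3 * real k * real k / real (n - k + 1)) / (real k / 2)
      = 2 / real k + 6 * real k / (real n - real k + 1)"
    using rk1 Dpos unfolding d by (simp add: field_simps)
  have b1: "2 / real k \<le> 4 / ?s"
  proof -
    have "?s \<le> 2 * real k" using klt rk1 by linarith
    hence "2 * ?s \<le> 4 * real k" by linarith
    have "2 / real k = (2 * ?s) / (real k * ?s)" using spos by simp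
    also have "\<dots> \<le> (4 * real k) / (real k * ?s)"
      using \<open>2 * ?s \<le> 4 * real k\<close> rk1 spos by (intro divide_right_mono) auto
    also have "\<dots> = 4 / ?s" using rk1 by simp
    finally show ?thesis .
  qed
  have b2: "6 * real k / (real n - real k + 1) \<le> 12 / ?s"
  proof -
    have "real k * ?s \<le> ?s * ?s" by (rule mult_right_mono[OF kle less_imp_le[OF spos]])
    hence ks: "real k * ?s \<le> real n" using ss by linarith
    have "6 * real k * ?s = 6 * (real k * ?s)" by simp
    also have "\<dots> \<le> 6 * real n" using ks by simp
    also have "\<dots> \<le> 12 * (real n - real k + 1)" using D by simp
    finally have "6 * real k * ?s \<le> 12 * (real n - real k + 1)" .
    have "6 * real k / (real n - real k + 1) = (6 * real k * ?s) / ((real n - real k + 1) * ?s)" using spos by simp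
    also have "\<dots> \<le> (12 * (real n - real k + 1)) / ((real n - real k + 1) * ?s)"
      using \<open>6 * real k * ?s \<le> 12 * (real n - real k + 1)\<close> Dpos spos by (intro divide_right_mono) auto
    also have "\<dots> = 12 / ?s" using Dpos by (intro canc_aux) simp
    finally show ?thesis .
  qed
  show "(1 + 3 * real k * real k / real (n - k + 1)) / (real k / 2) \<le> 16 / ?s"
    using eq b1 b2 by simp
qed


theorem lemma9:
  shows "\<exists>C>0. \<forall>n\<ge>1. \<forall>J. mechanism n J \<and> truthful_in_expectation n J
            \<longrightarrow> approx_ratio n J \<le> C / sqrt (real n)"
proof (intro exI[of _ 16] conjI allI impI)
  show "(0::real) < 16" by simp
  fix n :: nat and J :: "(nat \<Rightarrow> nat \<Rightarrow> real) \<Rightarrow> (nat \<Rightarrow> nat) pmf"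
  assume n1: "1 \<le> n" and h: "mechanism n J \<and> truthful_in_expectation n J"
  define k where "k = nat \<lfloor>sqrt (real n)\<rfloor>"
  have k1: "1 \<le> k" and kn: "k \<le> n" using arith_final[OF n1] unfolding k_def by auto
  have "approx_ratio n J \<le> (1 + 3 * real k * real k / real (n - k + 1)) / (real k / 2)"
    using ratio_bound[OF k1 kn] h by blast
  also have "\<dots> \<le> 16 / sqrt (real n)" using arith_final(3)[OF n1] unfolding k_def .
  finally show "approx_ratio n J \<le> 16 / sqrt (real n)" .
qed

end
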